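(* Let $V$ be a Poisson algebra over $\Bbbk$ with commutative associative product $xy$ and Poisson bracket $[x,y]$, and let $D:V\to V$ be a derivation of $V$ (a linear map that is a derivation of both the product and the bracket). On the free $H$-module $P=H\otimes V$ define $\lambda$-products on $V$ by $$(x_\lambda y)=xy,\qquad [x_\lambda y]=[x,y]+\partial\big(yD(x)\big)+\lambda D(xy),\qquad x,y\in V,$$ extended to all of $P$ by sesquilinearity. Then $P$ is a Poisson conformal algebra.
   Context: $\Bbbk$ is a field of characteristic $0$, $H=\Bbbk[\partial]$. A $\lambda$-product on an $H$-module $C$ is a $\Bbbk$-bilinear map $(x,y)\mapsto(x_\lambda y)=\sum_{n\ge0}\frac{\lambda^n}{n!}(x_{(n)}y)\in C[\lambda]$ satisfying sesquilinearity $(\partial x_\lambda y)=-\lambda(x_\lambda y)$, $(x_\lambda\partial y)=(\partial+\lambda)(x_\lambda y)$; $(x_{-\partial-\lambda}y)$ means $\sum_n\frac{(-\partial-\lambda)^n}{n!}(x_{(n)}y)$ with $\partial$ acting on coefficients. A Poisson conformal algebra is an $H$-module $P$ with two $\lambda$-products $(x_\lambda y)$ and $[x_\lambda y]$ such that: $(\cdot_\lambda\cdot)$ is associative, $(x_\lambda(y_\mu z))=((x_\lambda y)_{\lambda+\mu}z)$, and commutative, $(x_\lambda y)=(y_{-\partial-\lambda}x)$; $[\cdot_\lambda\cdot]$ is skew-symmetric, $[x_\lambda y]=-[y_{-\partial-\lambda}x]$, and satisfies the Jacobi identity $[x_\lambda[y_\mu z]]-[y_\mu[x_\lambda z]]=[[x_\lambda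 y]_{\lambda+\mu}z]$; and the conformal Leibniz rule $[x_\lambda(y_\mu z)]=([x_\lambda y]_{\lambda+\mu}z)+(y_\mu[x_\lambda z])$ holds for all $x,y,z\in P$. *)

theory Defs
  imports "HOL-Computational_Algebra.Polynomial"
begin

definition poisson_algebra ::
  "('k::field_char_0 \<Rightarrow> 'v::ab_group_add \<Rightarrow> 'v) \<Rightarrow> ('v \<Rightarrow> 'v \<Rightarrow> 'v) \<Rightarrow> ('v \<Rightarrow> 'v \<Rightarrow> 'v) \<Rightarrow> bool" where
  "poisson_algebra s pr br \<longleftrightarrow>
     vector_space s \<and>
     (\<forall>x. Vector_Spaces.linear s s (pr x)) \<and> (\<forall>y. Vector_Spaces.linear s s (\<lambda>x. pr x y)) \<and>
     (\<forall>x. Vector_Spaces.linear s s (br x)) \<and> (\<forall>y. Vector_Spaces.linear s s (\<lambda>x. br x y)) \<and>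
     (\<forall>x y z. pr (pr x y) z = pr x (pr y z)) \<and>
     (\<forall>x y. pr x y = pr y x) \<and>
     (\<forall>x y. br x y = - br y x) \<and>
     (\<forall>x y z. br x (br y z) = br (br x y) z + br y (br x z)) \<and>
     (\<forall>x y z. br x (pr y z) = pr (br x y) z + pr y (br x z))"

definition poisson_derivation ::
  "('k::field_char_0 \<Rightarrow> 'v::ab_group_add \<Rightarrow> 'v) \<Rightarrow> ('v \<Rightarrow> 'v \<Rightarrow> 'v) \<Rightarrow> ('v \<Rightarrow> 'v \<Rightarrow> 'v) \<Rightarrow> ('v \<Rightarrow> 'v) \<Rightarrow> bool" where
  "poisson_derivation s pr br D \<longleftrightarrow>
     Vector_Spaces.linear s s D \<and>
     (\<forall>x y. D (pr x y) = pr (D x) y + pr x (D y)) \<and>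
     (\<forall>x y. D (br x y) = br (D x) y + br x (D y))"

(* A lambda-product is given by its n-th products N x y n = x_(n) y, so that
   (x_\<lambda> y) = \<Sum>n. \<lambda>^n/n! (x_(n) y).
   Polynomials in \<lambda> (resp. \<lambda>,\<mu>) with coefficients in C are represented by their
   coefficient functions nat \<Rightarrow> 'c (resp. nat \<Rightarrow> nat \<Rightarrow> 'c, coefficient of \<lambda>^a \<mu>^b). *)

definition hmodule :: "('k::field_char_0 \<Rightarrow> 'c::ab_group_add \<Rightarrow> 'c) \<Rightarrow> ('c \<Rightarrow> 'c) \<Rightarrow> bool" where
  "hmodule s d \<longleftrightarrow> vector_space s \<and> Vector_Spaces.linear s s d"

(* coefficient of \<lambda>^n in (x_\<lambda> y) *)
definition lam_poly :: "('k::field_char_0 \<Rightarrow> 'c \<Rightarrow> 'c) \<Rightarrow> ('c \<Rightarrow> 'c \<Rightarrow> nat \<Rightarrow> 'c) \<Rightarrow> 'c \<Rightarrow> 'c \<Rightarrow> nat \<Rightarrow> 'c" where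
  "lam_poly s N x y n = s (inverse (fact n)) (N x y n)"

(* multiplication of a polynomial in \<lambda> by \<lambda> *)
definition lam_shift :: "(nat \<Rightarrow> 'c::zero) \<Rightarrow> nat \<Rightarrow> 'c" where
  "lam_shift p n = (if n = 0 then 0 else p (n - 1))"

definition lambda_product ::
  "('k::field_char_0 \<Rightarrow> 'c::ab_group_add \<Rightarrow> 'c) \<Rightarrow> ('c \<Rightarrow> 'c) \<Rightarrow> ('c \<Rightarrow> 'c \<Rightarrow> nat \<Rightarrow> 'c) \<Rightarrow> bool" where
  "lambda_product s d N \<longleftrightarrow>
     (\<forall>y n. Vector_Spaces.linear s s (\<lambda>x. N x y n)) \<and>
     (\<forall>x n. Vector_Spaces.linear s s (\<lambda>y. N x y n)) \<and>
     (\<forall>x y. finite {n. N x y n \<noteq> 0}) \<and>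
     (\<forall>x y n. lam_poly s N (d x) y n = - lam_shift (lam_poly s N x y) n) \<and>
     (\<forall>x y n. lam_poly s N x (d y) n = d (lam_poly s N x y n) + lam_shift (lam_poly s N x y) n)"

(* coefficient of \<lambda>^n in (x_{-\<partial>-\<lambda>} y) = \<Sum>m (-\<partial>-\<lambda>)^m/m! (x_(m) y) *)
definition lam_negsub ::
  "('k::field_char_0 \<Rightarrow> 'c::ab_group_add \<Rightarrow> 'c) \<Rightarrow> ('c \<Rightarrow> 'c) \<Rightarrow> ('c \<Rightarrow> 'c \<Rightarrow> nat \<Rightarrow> 'c) \<Rightarrow> 'c \<Rightarrow> 'c \<Rightarrow> nat \<Rightarrow> 'c" where
  "lam_negsub s d N x y n =
     (\<Sum>m\<in>{m. N x y m \<noteq> 0}. s ((-1) ^ m * of_nat (m choose n) / fact m) ((d ^^ (m - n)) (N x y m)))"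

(* coefficient of \<lambda>^a \<mu>^b in (x_\<lambda> (y_\<mu> z)), outer product N, inner product M *)
definition lam_nest ::
  "('k::field_char_0 \<Rightarrow> 'c \<Rightarrow> 'c) \<Rightarrow> ('c \<Rightarrow> 'c \<Rightarrow> nat \<Rightarrow> 'c) \<Rightarrow> ('c \<Rightarrow> 'c \<Rightarrow> nat \<Rightarrow> 'c) \<Rightarrow>
     'c \<Rightarrow> 'c \<Rightarrow> 'c \<Rightarrow> nat \<Rightarrow> nat \<Rightarrow> 'c" where
  "lam_nest s N M x y z a b = lam_poly s N x (lam_poly s M y z b) a"

(* coefficient of \<lambda>^a \<mu>^b in ((x_\<lambda> y)_{\<lambda>+\<mu>} z), inner product N, outer product M:
   ((x_\<lambda> y)_{\<lambda>+\<mu>} z) = \<Sum>k \<lambda>^k \<Sum>j (\<lambda>+\<mu>)^j/j! ((x_\<lambda> y)_k)_(j) z *)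
definition lam_comp ::
  "('k::field_char_0 \<Rightarrow> 'c::ab_group_add \<Rightarrow> 'c) \<Rightarrow> ('c \<Rightarrow> 'c \<Rightarrow> nat \<Rightarrow> 'c) \<Rightarrow> ('c \<Rightarrow> 'c \<Rightarrow> nat \<Rightarrow> 'c) \<Rightarrow>
     'c \<Rightarrow> 'c \<Rightarrow> 'c \<Rightarrow> nat \<Rightarrow> nat \<Rightarrow> 'c" where
  "lam_comp s N M x y z a b =
     (\<Sum>k\<in>{..a}. s (inverse (fact (a - k) * fact b)) (M (lam_poly s N x y k) z (a - k + b)))"

(* A = commutative associative lambda-product ( . _\<lambda> . ), B = Lie lambda-bracket [ . _\<lambda> . ] *)
definition poisson_conformal_algebra ::
  "('k::field_char_0 \<Rightarrow> 'c::ab_group_add \<Rightarrow> 'c) \<Rightarrow> ('c \<Rightarrow> 'c) \<Rightarrow> ('c \<Rightarrow> 'c \<Rightarrow> nat \<Rightarrow> 'c) \<Rightarrow> ('c \<Rightarrow> 'c \<Rightarrow> nat \<Rightarrow> 'c) \<Rightarrow> bool" where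
  "poisson_conformal_algebra s d A B \<longleftrightarrow>
     hmodule s d \<and> lambda_product s d A \<and> lambda_product s d B \<and>
     \<comment> \<open>associativity: (x_\<lambda>(y_\<mu> z)) = ((x_\<lambda> y)_{\<lambda>+\<mu>} z)\<close>
     (\<forall>x y z a b. lam_nest s A A x y z a b = lam_comp s A A x y z a b) \<and>
     \<comment> \<open>commutativity: (x_\<lambda> y) = (y_{-\<partial>-\<lambda>} x)\<close>
     (\<forall>x y n. lam_poly s A x y n = lam_negsub s d A y x n) \<and>
     \<comment> \<open>skew-symmetry: [x_\<lambda> y] = - [y_{-\<partial>-\<lambda>} x]\<close>
     (\<forall>x y n. lam_poly s B x y n = - lam_negsub s d B y x n) \<and>
     \<comment> \<open>Jacobi: [x_\<lambda>[y_\<mu> z]] - [y_\<mu>[x_\<lambda> z]] = [[x_\<lambda> y]_{\<lambda>+\<mu>} z]\<close>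
     (\<forall>x y z a b. lam_nest s B B x y z a b - lam_nest s B B y x z b a = lam_comp s B B x y z a b) \<and>
     \<comment> \<open>Leibniz: [x_\<lambda>(y_\<mu> z)] = ([x_\<lambda> y]_{\<lambda>+\<mu>} z) + (y_\<mu>[x_\<lambda> z])\<close>
     (\<forall>x y z a b. lam_nest s B A x y z a b = lam_comp s B A x y z a b + lam_nest s A B y x z b a)"

(* ---------- The free H-module P = H \<otimes> V, represented as V[\<partial>] = 'v poly ----------
   coeff p i is the V-component of \<partial>^i; \<partial> acts as pCons 0; V embeds as constants [:v:]. *)

definition pscale :: "('k \<Rightarrow> 'v::zero \<Rightarrow> 'v) \<Rightarrow> 'k \<Rightarrow> 'v poly \<Rightarrow> 'v poly" where
  "pscale s c p = map_poly (s c) p"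

definition pder :: "'v::zero poly \<Rightarrow> 'v poly" where
  "pder p = pCons 0 p"

(* A, B are lambda-products on P (hence sesquilinear) restricting on V to
   (x_\<lambda> y) = xy and [x_\<lambda> y] = [x,y] + \<partial>(y D(x)) + \<lambda> D(xy). *)
definition conformal_extension ::
  "('k::field_char_0 \<Rightarrow> 'v::ab_group_add \<Rightarrow> 'v) \<Rightarrow> ('v \<Rightarrow> 'v \<Rightarrow> 'v) \<Rightarrow> ('v \<Rightarrow> 'v \<Rightarrow> 'v) \<Rightarrow> ('v \<Rightarrow> 'v) \<Rightarrow>
     ('v poly \<Rightarrow> 'v poly \<Rightarrow> nat \<Rightarrow> 'v poly) \<Rightarrow> ('v poly \<Rightarrow> 'v poly \<Rightarrow> nat \<Rightarrow> 'v poly) \<Rightarrow> bool" where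
  "conformal_extension s pr br D A B \<longleftrightarrow>
     lambda_product (pscale s) pder A \<and> lambda_product (pscale s) pder B \<and>
     (\<forall>x y n. A [:x:] [:y:] n = (if n = 0 then [:pr x y:] else 0)) \<and>
     (\<forall>x y n. B [:x:] [:y:] n =
        (if n = 0 then [:br x y:] + pder [:pr y (D x):]
         else if n = 1 then [:D (pr x y):] else 0))"

end

theory Submission
  imports Defs
begin


definition Cmp :: "('k::field_char_0 \<Rightarrow> 'c \<Rightarrow> 'c) \<Rightarrow> (nat \<Rightarrow> nat \<Rightarrow> 'c::ab_group_add) \<Rightarrow> nat \<Rightarrow> nat \<Rightarrow> 'c" where
  "Cmp s G a b = (\<Sum>k\<le>a. s (of_nat ((a - k + b) choose b)) (G k (a - k + b)))"

definition T2 :: "('k::field_char_0 \<Rightarrow> 'c \<Rightarrow> 'c) \<Rightarrow> (nat \<Rightarrow> nat \<Rightarrow> 'c::ab_group_add) \<Rightarrow> nat \<Rightarrow> nat \<Rightarrow> 'c" where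
  "T2 s G a b = (\<Sum>k\<le>a. s (of_nat ((a - k + b) choose b)) (if a - k + b = 0 then 0 else G k (a - k + b - 1)))"

definition Ng :: "('k::field_char_0 \<Rightarrow> 'c \<Rightarrow> 'c) \<Rightarrow> ('c \<Rightarrow> 'c) \<Rightarrow> (nat \<Rightarrow> 'c::ab_group_add) \<Rightarrow> nat \<Rightarrow> nat \<Rightarrow> 'c" where
  "Ng s d F n K = (\<Sum>m<K. s ((-1) ^ m * of_nat (m choose n)) ((d ^^ (m - n)) (F m)))"

locale cfa =
  fixes s :: "'k::field_char_0 \<Rightarrow> 'c::ab_group_add \<Rightarrow> 'c" and d :: "'c \<Rightarrow> 'c"
  assumes vs: "vector_space s" and dl: "Vector_Spaces.linear s s d"
begin

lemma s_add: "s c (x + y) = s c x + s c y" using vs by (simp add: vector_space_def)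
lemma s_ladd: "s (a + b) x = s a x + s b x" using vs by (simp add: vector_space_def)
lemma s_s: "s a (s b x) = s (a * b) x" using vs by (simp add: vector_space_def)
lemma s_one[simp]: "s 1 x = x" using vs by (simp add: vector_space_def)
lemma s_zero[simp]: "s c 0 = 0" using s_add[of c 0 0] by simp
lemma s_zerol[simp]: "s 0 x = 0" using s_ladd[of 0 0 x] by simp
lemma s_neg: "s c (- x) = - s c x"
proof -
  have "s c (- x) + s c x = 0" by (metis s_add s_zero add.left_inverse)
  thus ?thesis by (simp add: eq_neg_iff_add_eq_0)
qed
lemma s_diff: "s c (x - y) = s c x - s c y" by (simp only: diff_conv_add_uminus s_add s_neg)
lemma s_sum: "s c (sum f A) = (\<Sum>a\<in>A. s c (f a))"
  by (induction A rule: infinite_finite_induct) (auto simp: s_add)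
lemma d_add: "d (x + y) = d x + d y" using dl by (simp add: Vector_Spaces.linear_iff)
lemma d_s: "d (s c x) = s c (d x)" using dl by (simp add: Vector_Spaces.linear_iff)
lemma d_zero[simp]: "d 0 = 0" using d_add[of 0 0] by simp
lemma d_neg: "d (- x) = - d x"
proof -
  have "d (- x) + d x = 0" by (metis d_add d_zero add.left_inverse)
  thus ?thesis by (simp add: eq_neg_iff_add_eq_0)
qed
lemma d_diff: "d (x - y) = d x - d y" by (simp only: diff_conv_add_uminus d_add d_neg)
lemma d_sum: "d (sum f A) = (\<Sum>a\<in>A. d (f a))"
  by (induction A rule: infinite_finite_induct) (auto simp: d_add)
lemma dp_add: "(d^^k) (x + y) = (d^^k) x + (d^^k) y" by (induction k) (auto simp: d_add)
lemma dp_s: "(d^^k) (s c x) = s c ((d^^k) x)" by (induction k) (auto simp: d_s)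
lemma dp_zero[simp]: "(d^^k) 0 = 0" by (induction k) auto
lemma dp_comm: "(d^^k) (d x) = d ((d^^k) x)" by (induction k) auto
lemma dp_neg: "(d^^k) (- x) = - (d^^k) x" by (induction k) (auto simp: d_neg)

context fixes N assumes lp: "lambda_product s d N"
begin
lemma lin1: "Vector_Spaces.linear s s (\<lambda>x. N x y n)"
  using lp unfolding lambda_product_def by blast
lemma lin2: "Vector_Spaces.linear s s (\<lambda>y. N x y n)"
  using lp unfolding lambda_product_def by blast
lemma N_add1: "N (x + x') y n = N x y n + N x' y n"
  using lin1[of y n] unfolding Vector_Spaces.linear_iff by simp
lemma N_add2: "N x (y + y') n = N x y n + N x y' n"
  using lin2[of x n] unfolding Vector_Spaces.linear_iff by simp
lemma N_s1: "N (s c x) y n = s c (N x y n)"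
  using lin1[of y n] unfolding Vector_Spaces.linear_iff by simp
lemma N_s2: "N x (s c y) n = s c (N x y n)"
  using lin2[of x n] unfolding Vector_Spaces.linear_iff by simp
lemma N_zero1[simp]: "N 0 y n = 0" using N_add1[of 0 0] by simp
lemma N_zero2[simp]: "N x 0 n = 0" using N_add2[of _ 0 0] by simp
lemma N_fin: "finite {n. N x y n \<noteq> 0}" using lp unfolding lambda_product_def by blast
lemma L_add1: "lam_poly s N (x + x') y n = lam_poly s N x y n + lam_poly s N x' y n"
  by (simp add: lam_poly_def N_add1 s_add)
lemma L_add2: "lam_poly s N x (y + y') n = lam_poly s N x y n + lam_poly s N x y' n"
  by (simp add: lam_poly_def N_add2 s_add)
lemma L_zero1[simp]: "lam_poly s N 0 y n = 0" by (simp add: lam_poly_def)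
lemma L_zero2[simp]: "lam_poly s N x 0 n = 0" by (simp add: lam_poly_def)
lemma L_neg1: "lam_poly s N (- x) y n = - lam_poly s N x y n"
proof -
  have "lam_poly s N (- x) y n + lam_poly s N x y n = 0" by (metis L_add1 L_zero1 add.left_inverse)
  thus ?thesis by (simp add: eq_neg_iff_add_eq_0)
qed
lemma L_neg2: "lam_poly s N x (- y) n = - lam_poly s N x y n"
proof -
  have "lam_poly s N x (- y) n + lam_poly s N x y n = 0" by (metis L_add2 L_zero2 add.left_inverse)
  thus ?thesis by (simp add: eq_neg_iff_add_eq_0)
qed
lemma L_diff1: "lam_poly s N (x - x') y n = lam_poly s N x y n - lam_poly s N x' y n"
  by (simp only: diff_conv_add_uminus L_add1 L_neg1)
lemma L_diff2: "lam_poly s N x (y - y') n = lam_poly s N x y n - lam_poly s N x y' n"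
  by (simp only: diff_conv_add_uminus L_add2 L_neg2)
lemma L_sum2: "lam_poly s N x (sum f A) n = (\<Sum>a\<in>A. lam_poly s N x (f a) n)"
  by (induction A rule: infinite_finite_induct) (auto simp: L_add2)
lemma L_sum1: "lam_poly s N (sum f A) y n = (\<Sum>a\<in>A. lam_poly s N (f a) y n)"
  by (induction A rule: infinite_finite_induct) (auto simp: L_add1)
lemma L_s2: "lam_poly s N x (s c y) n = s c (lam_poly s N x y n)"
  by (simp add: lam_poly_def N_s2 s_s mult.commute)
lemma L_s1: "lam_poly s N (s c x) y n = s c (lam_poly s N x y n)"
  by (simp add: lam_poly_def N_s1 s_s mult.commute)
lemma L_d1: "lam_poly s N (d x) y n = (if n = 0 then 0 else - lam_poly s N x y (n - 1))"
  using lp unfolding lambda_product_def lam_shift_def by simp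
lemma L_d2: "lam_poly s N x (d y) n = d (lam_poly s N x y n) + (if n = 0 then 0 else lam_poly s N x y (n - 1))"
  using lp unfolding lambda_product_def lam_shift_def by simp
lemma N_L: "N x y n = s (fact n) (lam_poly s N x y n)"
  by (simp add: lam_poly_def s_s)
lemma L_eq0: "N x y n = 0 \<Longrightarrow> lam_poly s N x y n = 0" by (simp add: lam_poly_def)
end

lemma KEY: "T2 s G a b = (if a = 0 then 0 else Cmp s G (a - 1) b) + (if b = 0 then 0 else Cmp s G a (b - 1))"
proof (cases a)
  case 0
  then show ?thesis by (cases b) (simp_all add: T2_def Cmp_def)
next
  case (Suc a')
  show ?thesis
  proof (cases b)
    case 0
    have "T2 s G a b = (\<Sum>k\<le>a'. G k (a' - k))"
      unfolding T2_def Suc 0 sum.atMost_Suc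
      by (auto intro!: sum.cong simp: Suc_diff_le)
    then show ?thesis by (simp add: Cmp_def Suc 0)
  next
    case (Suc b')
    have "T2 s G a b = (\<Sum>k\<le>a'. s (of_nat (Suc (a' - k + b') choose b')) (G k (Suc (a' - k + b'))))
       + (\<Sum>k\<le>a'. s (of_nat (Suc (a' - k + b') choose Suc b')) (G k (Suc (a' - k + b'))))
       + s 1 (G a b')"
      unfolding T2_def \<open>a = Suc a'\<close> Suc sum.atMost_Suc
      by (auto intro!: sum.cong simp: Suc_diff_le s_ladd sum.distrib[symmetric])
    moreover have "Cmp s G a (b - 1) = (\<Sum>k\<le>a'. s (of_nat (Suc (a' - k + b') choose b')) (G k (Suc (a' - k + b')))) + G a b'"
      unfolding Cmp_def \<open>a = Suc a'\<close> Suc sum.atMost_Suc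
      by (auto intro!: sum.cong simp: Suc_diff_le)
    moreover have "Cmp s G (a - 1) b = (\<Sum>k\<le>a'. s (of_nat (Suc (a' - k + b') choose Suc b')) (G k (Suc (a' - k + b'))))"
      unfolding Cmp_def \<open>a = Suc a'\<close> Suc
      by (auto intro!: sum.cong simp: Suc_diff_le)
    ultimately show ?thesis using \<open>a = Suc a'\<close> Suc by (simp add: ac_simps)
  qed
qed

lemma Cmp_add: "Cmp s (\<lambda>k j. G k j + G' k j) a b = Cmp s G a b + Cmp s G' a b"
  by (simp add: Cmp_def s_add sum.distrib)

lemma Cmp_dx: "Cmp s (\<lambda>k j. if k = 0 then 0 else - G (k - 1) j) a b = (if a = 0 then 0 else - Cmp s G (a - 1) b)"
proof (cases a)
  case (Suc a')
  show ?thesis unfolding Cmp_def Suc sum.atMost_Suc_shift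
    by (simp add: s_neg sum_negf)
qed (simp add: Cmp_def)

lemma T1_eq: "(\<Sum>k\<le>a. s (of_nat ((a - k + b) choose b)) (if k = 0 then 0 else G (k - 1) (a - k + b)))
   = (if a = 0 then 0 else Cmp s G (a - 1) b)"
proof (cases a)
  case (Suc a')
  show ?thesis unfolding Cmp_def Suc sum.atMost_Suc_shift by simp
qed simp

lemma Cmp_dy: "Cmp s (\<lambda>k j. (if k = 0 then 0 else G (k - 1) j) - (if j = 0 then 0 else G k (j - 1))) a b
   = (if b = 0 then 0 else - Cmp s G a (b - 1))"
proof -
  have "Cmp s (\<lambda>k j. (if k = 0 then 0 else G (k - 1) j) - (if j = 0 then 0 else G k (j - 1))) a b
     = (\<Sum>k\<le>a. s (of_nat ((a - k + b) choose b)) (if k = 0 then 0 else G (k - 1) (a - k + b))) - T2 s G a b"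
    unfolding Cmp_def T2_def by (simp add: s_diff sum_subtractf)
  also have "\<dots> = (if b = 0 then 0 else - Cmp s G a (b - 1))" unfolding T1_eq KEY by simp
  finally show ?thesis .
qed

lemma Cmp_dz: "Cmp s (\<lambda>k j. d (G k j) + (if j = 0 then 0 else G k (j - 1))) a b
   = d (Cmp s G a b) + (if a = 0 then 0 else Cmp s G (a - 1) b) + (if b = 0 then 0 else Cmp s G a (b - 1))"
proof -
  have "Cmp s (\<lambda>k j. d (G k j) + (if j = 0 then 0 else G k (j - 1))) a b = d (Cmp s G a b) + T2 s G a b"
    unfolding Cmp_def T2_def by (simp add: s_add sum.distrib d_sum d_s)
  thus ?thesis unfolding KEY by (simp add: add.assoc)
qed


lemma s_negl: "s (- a) x = - s a x"
proof -
  have "s (- a) x + s a x = 0" by (metis s_ladd s_zerol add.left_inverse)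
  thus ?thesis by (simp add: eq_neg_iff_add_eq_0)
qed

lemma ptw_dx: "s ((-1) ^ m * of_nat (m choose n)) ((d ^^ (m - n)) (d x))
   + s ((-1) ^ Suc m * of_nat (Suc m choose n)) ((d ^^ (Suc m - n)) x)
   = (if n = 0 then 0 else - s ((-1) ^ m * of_nat (m choose (n - 1))) ((d ^^ (m - (n - 1))) x))"
proof (cases n)
  case 0
  then show ?thesis by (simp add: dp_comm s_negl)
next
  case (Suc n')
  show ?thesis
  proof (cases "m \<le> n'")
    case True
    then have "m - n' = 0" "Suc m - n = 0" by (auto simp: Suc)
    then show ?thesis using True by (simp add: Suc s_negl binomial_eq_0)
  next
    case False
    then have "m - n' = Suc (m - n)" by (simp add: Suc)
    then have e1: "(d ^^ (m - n)) (d x) = (d ^^ (m - n')) x"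
      by (simp add: dp_comm)
    have e2: "Suc m - n = m - n'" using False by (simp add: Suc)
    show ?thesis unfolding e1 e2 using Suc
      by (simp add: s_ladd[symmetric] s_negl[symmetric] algebra_simps)
  qed
qed

lemma ptw_dy: "s ((-1) ^ Suc m * of_nat (Suc m choose n)) ((d ^^ (Suc m - n)) (- x))
   = s ((-1) ^ m * of_nat (m choose n)) (d ((d ^^ (m - n)) x))
   + (if n = 0 then 0 else s ((-1) ^ m * of_nat (m choose (n - 1))) ((d ^^ (m - (n - 1))) x))"
proof (cases n)
  case 0
  then show ?thesis by (simp add: s_negl dp_neg s_neg d_neg)
next
  case (Suc n')
  show ?thesis
  proof (cases "m \<le> n'")
    case True
    then have "m - n' = 0" "Suc m - n = 0" by (auto simp: Suc)
    then show ?thesis using True by (simp add: Suc s_negl s_neg binomial_eq_0)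
  next
    case False
    then have "m - n' = Suc (m - n)" by (simp add: Suc)
    then have e1: "d ((d ^^ (m - n)) x) = (d ^^ (m - n')) x"
      by simp
    have e2: "Suc m - n = m - n'" using False by (simp add: Suc)
    have c: "- ((-1::'k) ^ Suc m * of_nat (Suc m choose n)) = (-1) ^ m * of_nat (m choose n) + (-1) ^ m * of_nat (m choose (n - 1)) "
      by (simp add: Suc algebra_simps)
    show ?thesis unfolding e1 e2 dp_neg s_neg s_negl[symmetric] c s_ladd using Suc by simp
  qed
qed

lemma Ng_add: "Ng s d (\<lambda>m. F m + F' m) n K = Ng s d F n K + Ng s d F' n K"
  by (simp add: Ng_def dp_add s_add sum.distrib)

lemma Ng_dx: assumes "F K = 0"
  shows "Ng s d (\<lambda>m. d (F m) + (if m = 0 then 0 else F (m - 1))) n (Suc K)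
    = (if n = 0 then 0 else - Ng s d F (n - 1) K)"
proof -
  have "Ng s d (\<lambda>m. d (F m) + (if m = 0 then 0 else F (m - 1))) n (Suc K)
     = (\<Sum>m<Suc K. s ((-1) ^ m * of_nat (m choose n)) ((d ^^ (m - n)) (d (F m))))
     + (\<Sum>m<Suc K. s ((-1) ^ m * of_nat (m choose n)) ((d ^^ (m - n)) (if m = 0 then 0 else F (m - 1))))"
    by (simp add: Ng_def dp_add s_add sum.distrib)
  also have "\<dots> = (\<Sum>m<K. s ((-1) ^ m * of_nat (m choose n)) ((d ^^ (m - n)) (d (F m))))
     + (\<Sum>m<K. s ((-1) ^ Suc m * of_nat (Suc m choose n)) ((d ^^ (Suc m - n)) (F m)))"
  proof -
    have "(\<Sum>m<Suc K. s ((-1) ^ m * of_nat (m choose n)) ((d ^^ (m - n)) (d (F m))))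
        = (\<Sum>m<K. s ((-1) ^ m * of_nat (m choose n)) ((d ^^ (m - n)) (d (F m))))"
      unfolding sum.lessThan_Suc using assms by simp
    moreover have "(\<Sum>m<Suc K. s ((-1) ^ m * of_nat (m choose n)) ((d ^^ (m - n)) (if m = 0 then 0 else F (m - 1))))
        = (\<Sum>m<K. s ((-1) ^ Suc m * of_nat (Suc m choose n)) ((d ^^ (Suc m - n)) (F m)))"
      unfolding sum.lessThan_Suc_shift by simp
    ultimately show ?thesis by simp
  qed
  also have "\<dots> = (\<Sum>m<K. (if n = 0 then 0 else - s ((-1) ^ m * of_nat (m choose (n - 1))) ((d ^^ (m - (n - 1))) (F m))))"
    unfolding sum.distrib[symmetric] ptw_dx ..
  also have "\<dots> = (if n = 0 then 0 else - Ng s d F (n - 1) K)"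
    by (simp add: Ng_def sum_negf)
  finally show ?thesis .
qed

lemma Ng_dy: "Ng s d (\<lambda>m. - (if m = 0 then 0 else F (m - 1))) n (Suc K)
    = d (Ng s d F n K) + (if n = 0 then 0 else Ng s d F (n - 1) K)"
proof -
  have "Ng s d (\<lambda>m. - (if m = 0 then 0 else F (m - 1))) n (Suc K)
     = (\<Sum>m<K. s ((-1) ^ Suc m * of_nat (Suc m choose n)) ((d ^^ (Suc m - n)) (- F m)))"
    unfolding Ng_def sum.lessThan_Suc_shift[of _ K] by simp
  also have "\<dots> = (\<Sum>m<K. s ((-1) ^ m * of_nat (m choose n)) (d ((d ^^ (m - n)) (F m)))
     + (if n = 0 then 0 else s ((-1) ^ m * of_nat (m choose (n - 1))) ((d ^^ (m - (n - 1))) (F m))))"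
    unfolding ptw_dy ..
  also have "\<dots> = d (Ng s d F n K) + (if n = 0 then 0 else Ng s d F (n - 1) K)"
    by (simp add: Ng_def sum.distrib d_sum d_s)
  finally show ?thesis .
qed


context fixes N M assumes lpN: "lambda_product s d N" and lpM: "lambda_product s d M"
begin
lemmas [simp] = L_zero1[OF lpN] L_zero2[OF lpN] L_zero1[OF lpM] L_zero2[OF lpM]

lemma nest_add1: "lam_nest s N M (x + x') y z a b = lam_nest s N M x y z a b + lam_nest s N M x' y z a b"
  by (simp add: lam_nest_def L_add1[OF lpN])
lemma nest_add2: "lam_nest s N M x (y + y') z a b = lam_nest s N M x y z a b + lam_nest s N M x y' z a b"
  by (simp add: lam_nest_def L_add1[OF lpM] L_add2[OF lpN])
lemma nest_add3: "lam_nest s N M x y (z + z') a b = lam_nest s N M x y z a b + lam_nest s N M x y z' a b"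
  by (simp add: lam_nest_def L_add2[OF lpM] L_add2[OF lpN])
lemma nest_dx: "lam_nest s N M (d x) y z a b = (if a = 0 then 0 else - lam_nest s N M x y z (a - 1) b)"
  by (simp add: lam_nest_def L_d1[OF lpN])
lemma nest_dy: "lam_nest s N M x (d y) z a b = (if b = 0 then 0 else - lam_nest s N M x y z a (b - 1))"
  by (simp add: lam_nest_def L_d1[OF lpM] L_neg2[OF lpN])
lemma nest_dz: "lam_nest s N M x y (d z) a b = d (lam_nest s N M x y z a b)
   + (if a = 0 then 0 else lam_nest s N M x y z (a - 1) b) + (if b = 0 then 0 else lam_nest s N M x y z a (b - 1))"
  by (simp add: lam_nest_def L_d2[OF lpM] L_add2[OF lpN] L_d2[OF lpN] add.assoc)

lemma comp_alt: "lam_comp s N M x y z a b = Cmp s (\<lambda>k j. lam_poly s M (lam_poly s N x y k) z j) a b"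
  unfolding lam_comp_def Cmp_def
proof (rule sum.cong[OF refl])
  fix k assume "k \<in> {..a}"
  have c: "inverse (fact (a - k) * fact b) * fact (a - k + b) = (of_nat ((a - k + b) choose b) :: 'k)"
    by (simp add: binomial_fact field_simps)
  show "s (inverse (fact (a - k) * fact b)) (M (lam_poly s N x y k) z (a - k + b)) =
         s (of_nat ((a - k + b) choose b)) (lam_poly s M (lam_poly s N x y k) z (a - k + b))"
    by (subst N_L[OF lpM]) (simp only: s_s c)
qed

lemma comp_add1: "lam_comp s N M (x + x') y z a b = lam_comp s N M x y z a b + lam_comp s N M x' y z a b"
  by (simp add: comp_alt L_add1[OF lpN] L_add1[OF lpM] Cmp_add)
lemma comp_add2: "lam_comp s N M x (y + y') z a b = lam_comp s N M x y z a b + lam_comp s N M x y' z a b"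
  by (simp add: comp_alt L_add2[OF lpN] L_add1[OF lpM] Cmp_add)
lemma comp_add3: "lam_comp s N M x y (z + z') a b = lam_comp s N M x y z a b + lam_comp s N M x y z' a b"
  by (simp add: comp_alt L_add2[OF lpM] Cmp_add)

lemma comp_dx: "lam_comp s N M (d x) y z a b = (if a = 0 then 0 else - lam_comp s N M x y z (a - 1) b)"
proof -
  have "(\<lambda>k j. lam_poly s M (lam_poly s N (d x) y k) z j)
      = (\<lambda>k j. if k = 0 then 0 else - lam_poly s M (lam_poly s N x y (k - 1)) z j)"
    by (auto simp: L_d1[OF lpN] L_neg1[OF lpM] intro!: ext)
  thus ?thesis unfolding comp_alt using Cmp_dx[of "\<lambda>k j. lam_poly s M (lam_poly s N x y k) z j" a b] by simp
qed

lemma comp_dy: "lam_comp s N M x (d y) z a b = (if b = 0 then 0 else - lam_comp s N M x y z a (b - 1))"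
proof -
  have "(\<lambda>k j. lam_poly s M (lam_poly s N x (d y) k) z j)
      = (\<lambda>k j. (if k = 0 then 0 else lam_poly s M (lam_poly s N x y (k - 1)) z j)
               - (if j = 0 then 0 else lam_poly s M (lam_poly s N x y k) z (j - 1)))"
    by (auto simp: L_d2[OF lpN] L_add1[OF lpM] L_d1[OF lpM] intro!: ext)
  thus ?thesis unfolding comp_alt using Cmp_dy[of "\<lambda>k j. lam_poly s M (lam_poly s N x y k) z j" a b] by simp
qed

lemma comp_dz: "lam_comp s N M x y (d z) a b = d (lam_comp s N M x y z a b)
   + (if a = 0 then 0 else lam_comp s N M x y z (a - 1) b) + (if b = 0 then 0 else lam_comp s N M x y z a (b - 1))"
proof -
  have "(\<lambda>k j. lam_poly s M (lam_poly s N x y k) (d z) j)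
      = (\<lambda>k j. d (lam_poly s M (lam_poly s N x y k) z j) + (if j = 0 then 0 else lam_poly s M (lam_poly s N x y k) z (j - 1)))"
    by (auto simp: L_d2[OF lpM] intro!: ext)
  thus ?thesis unfolding comp_alt using Cmp_dz[of "\<lambda>k j. lam_poly s M (lam_poly s N x y k) z j" a b] by simp
qed

end

context fixes N assumes lp: "lambda_product s d N"
begin
lemmas [simp] = L_zero1[OF lp] L_zero2[OF lp]

lemma bound: "\<exists>K. \<forall>m\<ge>K. N x y m = 0"
proof -
  obtain K where "\<forall>m\<in>{m. N x y m \<noteq> 0}. m < K"
    using N_fin[OF lp, of x y] finite_nat_set_iff_bounded by blast
  thus ?thesis by (metis (mono_tags) mem_Collect_eq not_le)
qed

lemma negsub_Ng: assumes "\<forall>m\<ge>K. N y x m = 0"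
  shows "lam_negsub s d N y x n = Ng s d (lam_poly s N y x) n K"
proof -
  have sub: "{m. N y x m \<noteq> 0} \<subseteq> {..<K}" using assms by (auto simp: not_less[symmetric])
  have "lam_negsub s d N y x n = (\<Sum>m<K. s ((-1) ^ m * of_nat (m choose n) / fact m) ((d ^^ (m - n)) (N y x m)))"
    unfolding lam_negsub_def by (rule sum.mono_neutral_left) (use sub in auto)
  also have "\<dots> = Ng s d (lam_poly s N y x) n K"
    unfolding Ng_def by (rule sum.cong) (simp_all add: N_L[OF lp, of y x] dp_s s_s)
  finally show ?thesis .
qed

lemma negsub_add2: "lam_negsub s d N y (x + x') n = lam_negsub s d N y x n + lam_negsub s d N y x' n"
proof -
  obtain K1 where K1: "\<forall>m\<ge>K1. N y x m = 0" using bound by blast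
  obtain K2 where K2: "\<forall>m\<ge>K2. N y x' m = 0" using bound by blast
  let ?K = "max K1 K2"
  have a: "\<forall>m\<ge>?K. N y x m = 0" "\<forall>m\<ge>?K. N y x' m = 0" "\<forall>m\<ge>?K. N y (x + x') m = 0"
    using K1 K2 by (auto simp: N_add2[OF lp])
  show ?thesis unfolding negsub_Ng[OF a(1)] negsub_Ng[OF a(2)] negsub_Ng[OF a(3)]
  proof -
    have "lam_poly s N y (x + x') = (\<lambda>m. lam_poly s N y x m + lam_poly s N y x' m)"
      by (rule ext) (rule L_add2[OF lp])
    thus "Ng s d (lam_poly s N y (x + x')) n ?K = Ng s d (lam_poly s N y x) n ?K + Ng s d (lam_poly s N y x') n ?K"
      by (simp only: Ng_add)
  qed
qed

lemma negsub_add1: "lam_negsub s d N (y + y') x n = lam_negsub s d N y x n + lam_negsub s d N y' x n"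
proof -
  obtain K1 where K1: "\<forall>m\<ge>K1. N y x m = 0" using bound by blast
  obtain K2 where K2: "\<forall>m\<ge>K2. N y' x m = 0" using bound by blast
  let ?K = "max K1 K2"
  have a: "\<forall>m\<ge>?K. N y x m = 0" "\<forall>m\<ge>?K. N y' x m = 0" "\<forall>m\<ge>?K. N (y + y') x m = 0"
    using K1 K2 by (auto simp: N_add1[OF lp])
  show ?thesis unfolding negsub_Ng[OF a(1)] negsub_Ng[OF a(2)] negsub_Ng[OF a(3)]
  proof -
    have "lam_poly s N (y + y') x = (\<lambda>m. lam_poly s N y x m + lam_poly s N y' x m)"
      by (rule ext) (rule L_add1[OF lp])
    thus "Ng s d (lam_poly s N (y + y') x) n ?K = Ng s d (lam_poly s N y x) n ?K + Ng s d (lam_poly s N y' x) n ?K"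
      by (simp only: Ng_add)
  qed
qed

lemma negsub_dx: "lam_negsub s d N y (d x) n = (if n = 0 then 0 else - lam_negsub s d N y x (n - 1))"
proof -
  obtain K where K: "\<forall>m\<ge>K. N y x m = 0" using bound by blast
  have K': "\<forall>m\<ge>Suc K. N y (d x) m = 0"
  proof (intro allI impI)
    fix m assume "Suc K \<le> m"
    then have "lam_poly s N y (d x) m = 0" using K by (simp add: L_d2[OF lp] L_eq0[OF lp])
    thus "N y (d x) m = 0" by (simp add: N_L[OF lp, of y "d x"])
  qed
  have f: "lam_poly s N y (d x) = (\<lambda>m. d (lam_poly s N y x m) + (if m = 0 then 0 else lam_poly s N y x (m - 1)))"
    by (rule ext) (simp add: L_d2[OF lp])
  show ?thesis unfolding negsub_Ng[OF K'] negsub_Ng[OF K] f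
    by (rule Ng_dx) (use K in \<open>simp add: L_eq0[OF lp]\<close>)
qed

lemma negsub_dy: "lam_negsub s d N (d y) x n = d (lam_negsub s d N y x n) + (if n = 0 then 0 else lam_negsub s d N y x (n - 1))"
proof -
  obtain K where K: "\<forall>m\<ge>K. N y x m = 0" using bound by blast
  have K': "\<forall>m\<ge>Suc K. N (d y) x m = 0"
  proof (intro allI impI)
    fix m assume "Suc K \<le> m"
    then have "lam_poly s N (d y) x m = 0" using K by (simp add: L_d1[OF lp] L_eq0[OF lp])
    thus "N (d y) x m = 0" by (simp add: N_L[OF lp, of "d y" x])
  qed
  have f: "lam_poly s N (d y) x = (\<lambda>m. - (if m = 0 then 0 else lam_poly s N y x (m - 1)))"
    by (rule ext) (simp add: L_d1[OF lp])
  show ?thesis unfolding negsub_Ng[OF K'] negsub_Ng[OF K] f by (rule Ng_dy)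
qed

end


definition good3 :: "('c \<Rightarrow> 'c \<Rightarrow> 'c \<Rightarrow> nat \<Rightarrow> nat \<Rightarrow> 'c) \<Rightarrow> bool" where
  "good3 E \<longleftrightarrow>
    (\<forall>x x' y z a b. E (x + x') y z a b = E x y z a b + E x' y z a b) \<and>
    (\<forall>x y y' z a b. E x (y + y') z a b = E x y z a b + E x y' z a b) \<and>
    (\<forall>x y z z' a b. E x y (z + z') a b = E x y z a b + E x y z' a b) \<and>
    (\<forall>x y z a b. E (d x) y z a b = (if a = 0 then 0 else - E x y z (a - 1) b)) \<and>
    (\<forall>x y z a b. E x (d y) z a b = (if b = 0 then 0 else - E x y z a (b - 1))) \<and>
    (\<forall>x y z a b. E x y (d z) a b = d (E x y z a b)
       + (if a = 0 then 0 else E x y z (a - 1) b) + (if b = 0 then 0 else E x y z a (b - 1)))"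

lemma good3_nest: "lambda_product s d N \<Longrightarrow> lambda_product s d M \<Longrightarrow> good3 (lam_nest s N M)"
  unfolding good3_def by (simp add: nest_add1 nest_add2 nest_add3 nest_dx nest_dy nest_dz)

lemma good3_comp: "lambda_product s d N \<Longrightarrow> lambda_product s d M \<Longrightarrow> good3 (lam_comp s N M)"
  unfolding good3_def by (simp add: comp_add1 comp_add2 comp_add3 comp_dx comp_dy comp_dz)

lemma good3_swap: "lambda_product s d N \<Longrightarrow> lambda_product s d M \<Longrightarrow>
   good3 (\<lambda>x y z a b. lam_nest s N M y x z b a)"
  unfolding good3_def by (simp add: nest_add1 nest_add2 nest_add3 nest_dx nest_dy nest_dz ac_simps)

lemma good3_zero: "good3 (\<lambda>x y z a b. 0)"
  unfolding good3_def by simp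

lemma reduce3:
  assumes ind: "\<And>P x. (\<And>u. P (g u)) \<Longrightarrow> (\<And>p q. P p \<Longrightarrow> P q \<Longrightarrow> P (p + q)) \<Longrightarrow> (\<And>p. P p \<Longrightarrow> P (d p)) \<Longrightarrow> P x"
    and g1: "good3 E1" and g2: "good3 E2" and g3: "good3 E3"
    and base: "\<And>u v w a b. E1 (g u) (g v) (g w) a b = E2 (g u) (g v) (g w) a b + E3 (g u) (g v) (g w) a b"
  shows "E1 x y z a b = E2 x y z a b + E3 x y z a b"
proof -
  define Q where "Q = (\<lambda>x y z. \<forall>a b. E1 x y z a b = E2 x y z a b + E3 x y z a b)"
  have addx: "Q (x + x') y z" if "Q x y z" "Q x' y z" for x x' y z
    using that g1 g2 g3 unfolding good3_def Q_def by (simp add: ac_simps)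
  have addy: "Q x (y + y') z" if "Q x y z" "Q x y' z" for x y y' z
    using that g1 g2 g3 unfolding good3_def Q_def by (simp add: ac_simps)
  have addz: "Q x y (z + z')" if "Q x y z" "Q x y z'" for x y z z'
    using that g1 g2 g3 unfolding good3_def Q_def by (simp add: ac_simps)
  have dx: "Q (d x) y z" if "Q x y z" for x y z
    using that g1 g2 g3 unfolding good3_def Q_def by simp
  have dy: "Q x (d y) z" if "Q x y z" for x y z
    using that g1 g2 g3 unfolding good3_def Q_def by simp
  have dz: "Q x y (d z)" if "Q x y z" for x y z
    using that g1 g2 g3 unfolding good3_def Q_def by (simp add: d_add ac_simps)
  have "\<forall>y z. Q x y z"
  proof (rule ind[of "\<lambda>x. \<forall>y z. Q x y z"])
    fix u show "\<forall>y z. Q (g u) y z"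
    proof (intro allI)
      fix y z show "Q (g u) y z"
      proof -
        have "\<forall>z. Q (g u) y z"
        proof (rule ind[of "\<lambda>y. \<forall>z. Q (g u) y z"])
          fix v show "\<forall>z. Q (g u) (g v) z"
          proof
            fix z show "Q (g u) (g v) z"
              by (rule ind[of "\<lambda>z. Q (g u) (g v) z"]) (use base addz dz in \<open>auto simp: Q_def\<close>)+
          qed
        qed (blast intro: addy dy)+
        thus ?thesis by blast
      qed
    qed
  qed (blast intro: addx dx)+
  thus ?thesis by (simp add: Q_def)
qed

definition good2 :: "('c \<Rightarrow> 'c \<Rightarrow> nat \<Rightarrow> 'c) \<Rightarrow> bool" where
  "good2 E \<longleftrightarrow>
    (\<forall>x x' y n. E (x + x') y n = E x y n + E x' y n) \<and>
    (\<forall>x y y' n. E x (y + y') n = E x y n + E x y' n) \<and>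
    (\<forall>x y n. E (d x) y n = (if n = 0 then 0 else - E x y (n - 1))) \<and>
    (\<forall>x y n. E x (d y) n = d (E x y n) + (if n = 0 then 0 else E x y (n - 1)))"

lemma good2_L: "lambda_product s d N \<Longrightarrow> good2 (lam_poly s N)"
  unfolding good2_def by (simp add: L_add1 L_add2 L_d1 L_d2)

lemma good2_negsub: "lambda_product s d N \<Longrightarrow> good2 (\<lambda>x y n. lam_negsub s d N y x n)"
  unfolding good2_def by (simp add: negsub_add1 negsub_add2 negsub_dx negsub_dy)

lemma good2_neg: "good2 E \<Longrightarrow> good2 (\<lambda>x y n. - E x y n)"
  unfolding good2_def by (simp add: d_neg)

lemma reduce2:
  assumes ind: "\<And>P x. (\<And>u. P (g u)) \<Longrightarrow> (\<And>p q. P p \<Longrightarrow> P q \<Longrightarrow> P (p + q)) \<Longrightarrow> (\<And>p. P p \<Longrightarrow> P (d p)) \<Longrightarrow> P x"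
    and g1: "good2 E1" and g2: "good2 E2"
    and base: "\<And>u v n. E1 (g u) (g v) n = E2 (g u) (g v) n"
  shows "E1 x y n = E2 x y n"
proof -
  define Q where "Q = (\<lambda>x y. \<forall>n. E1 x y n = E2 x y n)"
  have addx: "Q (x + x') y" if "Q x y" "Q x' y" for x x' y
    using that g1 g2 unfolding good2_def Q_def by simp
  have addy: "Q x (y + y')" if "Q x y" "Q x y'" for x y y'
    using that g1 g2 unfolding good2_def Q_def by simp
  have dx: "Q (d x) y" if "Q x y" for x y
    using that g1 g2 unfolding good2_def Q_def by simp
  have dy: "Q x (d y)" if "Q x y" for x y
    using that g1 g2 unfolding good2_def Q_def by simp
  have "\<forall>y. Q x y"
  proof (rule ind[of "\<lambda>x. \<forall>y. Q x y"])
    fix u show "\<forall>y. Q (g u) y"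
    proof
      fix y show "Q (g u) y"
        by (rule ind[of "\<lambda>y. Q (g u) y"]) (use base addy dy in \<open>auto simp: Q_def\<close>)+
    qed
  qed (blast intro: addx dx)+
  thus ?thesis by (simp add: Q_def)
qed


lemma Cmp_small: assumes "\<forall>k j. 2 \<le> k \<longrightarrow> G k j = 0"
  shows "Cmp s G a b = s (of_nat ((a + b) choose b)) (G 0 (a + b))
     + (if a = 0 then 0 else s (of_nat ((a - 1 + b) choose b)) (G 1 (a - 1 + b)))"
proof (cases a)
  case 0 then show ?thesis by (simp add: Cmp_def)
next
  case (Suc a')
  have "Cmp s G a b = (\<Sum>k\<le>Suc a'. s (of_nat ((Suc a' - k + b) choose b)) (G k (Suc a' - k + b)))"
    by (simp add: Cmp_def Suc)
  also have "\<dots> = s (of_nat ((Suc a' + b) choose b)) (G 0 (Suc a' + b)) +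
      (\<Sum>k\<le>a'. s (of_nat ((a' - k + b) choose b)) (G (Suc k) (a' - k + b)))"
    unfolding sum.atMost_Suc_shift by simp
  also have "(\<Sum>k\<le>a'. s (of_nat ((a' - k + b) choose b)) (G (Suc k) (a' - k + b)))
     = s (of_nat ((a' + b) choose b)) (G 1 (a' + b))"
    by (cases a') (simp_all del: sum.atMost_Suc add: sum.atMost_Suc_shift assms)
  finally show ?thesis by (simp add: Suc)
qed

end


lemma vs_zero: assumes "vector_space s" shows "s c 0 = 0"
proof -
  have "s c (0 + 0) = s c 0 + s c 0" using assms unfolding vector_space_def by blast
  thus ?thesis by simp
qed

lemma pscale_coeff: "vector_space s \<Longrightarrow> coeff (pscale s c p) n = s c (coeff p n)"
  unfolding pscale_def by (rule coeff_map_poly) (simp add: vs_zero)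

lemma vs_pscale: assumes vs: "vector_space s" shows "vector_space (pscale s)"
  using vs vs_zero[OF vs] unfolding vector_space_def by (simp add: poly_eq_iff pscale_coeff[OF vs])

lemma pder_coeff: "coeff (pder p) n = (if n = 0 then 0 else coeff p (n - 1))"
  unfolding pder_def by (rule coeff_pCons')

lemma lin_pder: assumes vs: "vector_space s" shows "Vector_Spaces.linear (pscale s) (pscale s) pder"
  unfolding Vector_Spaces.linear_iff
  using vs vs_pscale[OF vs] by (simp add: poly_eq_iff pscale_coeff[OF vs] pder_coeff vs_zero[OF vs])

lemma cfa_poly: "vector_space s \<Longrightarrow> cfa (pscale s) pder"
  unfolding cfa_def using vs_pscale lin_pder by blast

lemma poly_gen: "(\<And>u. P [:u:]) \<Longrightarrow> (\<And>p q. P p \<Longrightarrow> P q \<Longrightarrow> P (p + q)) \<Longrightarrow> (\<And>p. P p \<Longrightarrow> P (pder p)) \<Longrightarrow> P x"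
proof (induction x)
  case 0
  then show ?case using 0(1)[of 0] by simp
next
  case (pCons a p)
  have "pCons a p = [:a:] + pder p" by (simp add: pder_def)
  then show ?case using pCons by metis
qed



definition negsh :: "(nat \<Rightarrow> 'a::ab_group_add) \<Rightarrow> nat \<Rightarrow> 'a" where
  "negsh F n = (if n = 0 then 0 else - F (n - 1))"
definition plusd :: "(nat \<Rightarrow> 'a::ab_group_add poly) \<Rightarrow> nat \<Rightarrow> 'a poly" where
  "plusd F n = pder (F n) + (if n = 0 then 0 else F (n - 1))"
definition Exr :: "('v \<Rightarrow> 'v \<Rightarrow> nat \<Rightarrow> 'v::ab_group_add poly) \<Rightarrow> 'v poly \<Rightarrow> 'v poly \<Rightarrow> nat \<Rightarrow> nat \<Rightarrow> nat \<Rightarrow> 'v poly" where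
  "Exr f p q m m' n = (\<Sum>i\<le>m. \<Sum>j\<le>m'. (negsh ^^ i) ((plusd ^^ j) (f (coeff p i) (coeff q j))) n)"
definition Ex :: "('v \<Rightarrow> 'v \<Rightarrow> nat \<Rightarrow> 'v::ab_group_add poly) \<Rightarrow> 'v poly \<Rightarrow> 'v poly \<Rightarrow> nat \<Rightarrow> 'v poly" where
  "Ex f p q = Exr f p q (degree p) (degree q)"
definition Nx :: "('k::field_char_0 \<Rightarrow> 'v \<Rightarrow> 'v) \<Rightarrow> ('v \<Rightarrow> 'v \<Rightarrow> nat \<Rightarrow> 'v::ab_group_add poly) \<Rightarrow> 'v poly \<Rightarrow> 'v poly \<Rightarrow> nat \<Rightarrow> 'v poly" where
  "Nx s f p q n = pscale s (fact n) (Ex f p q n)"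

lemma hom_sum: fixes h :: "(nat \<Rightarrow> 'a::ab_group_add) \<Rightarrow> nat \<Rightarrow> 'a" assumes "\<And>F G. h (\<lambda>n. F n + G n) = (\<lambda>n. h F n + h G n)" "h (\<lambda>n. 0) = (\<lambda>n. 0)"
  shows "h (\<lambda>n. sum (\<lambda>a. \<Phi> a n) A) n = (\<Sum>a\<in>A. h (\<Phi> a) n)"
proof (induction A rule: infinite_finite_induct)
  case (infinite A) then show ?case using assms(2) by (simp add: fun_eq_iff)
next
  case empty then show ?case using assms(2) by (simp add: fun_eq_iff)
next
  case (insert x F)
  then show ?case using assms(1)[of "\<Phi> x" "\<lambda>n. sum (\<lambda>a. \<Phi> a n) F"] by (simp add: fun_eq_iff)
qed

lemma hom_pow: fixes h :: "(nat \<Rightarrow> 'a::ab_group_add) \<Rightarrow> nat \<Rightarrow> 'a" assumes "\<And>F G. h (\<lambda>n. F n + G n) = (\<lambda>n. h F n + h G n)"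
  shows "(h ^^ i) (\<lambda>n. F n + G n) = (\<lambda>n. (h ^^ i) F n + (h ^^ i) G n)"
  by (induction i) (auto simp: assms)

lemma negsh_add: "negsh (\<lambda>n. F n + G n) = (\<lambda>n. negsh F n + negsh G n)"
  by (auto simp: negsh_def fun_eq_iff)
lemma plusd_add: "plusd (\<lambda>n. F n + G n) = (\<lambda>n. plusd F n + plusd G n)"
  by (auto simp: plusd_def pder_def fun_eq_iff)
lemma negsh_0[simp]: "negsh (\<lambda>n::nat. 0::'a::ab_group_add) = (\<lambda>n. 0)" by (auto simp: negsh_def fun_eq_iff)
lemma plusd_0[simp]: "plusd (\<lambda>n::nat. 0::'a::ab_group_add poly) = (\<lambda>n. 0)" by (auto simp: plusd_def pder_def fun_eq_iff)
lemma pow_0: fixes h :: "(nat \<Rightarrow> 'a::ab_group_add) \<Rightarrow> nat \<Rightarrow> 'a" shows "h (\<lambda>n. 0) = (\<lambda>n. 0) \<Longrightarrow> (h ^^ i) (\<lambda>n. 0) = (\<lambda>n. 0)" by (induction i) auto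

lemma negsh_plusd: "negsh (plusd F) = plusd (negsh F)"
  by (auto simp: negsh_def plusd_def pder_def fun_eq_iff)
lemma negsh_pow_plusd: "(negsh ^^ i) (plusd F) = plusd ((negsh ^^ i) F)"
  by (induction i) (auto simp: negsh_plusd)

context fixes s0 :: "'k::field_char_0 \<Rightarrow> 'v::ab_group_add \<Rightarrow> 'v" assumes vs0: "vector_space s0"
begin

interpretation P: cfa "pscale s0" pder by (rule cfa_poly[OF vs0])

lemma negsh_sc: "negsh (\<lambda>n. pscale s0 c (F n)) = (\<lambda>n. pscale s0 c (negsh F n))"
  by (auto simp: negsh_def fun_eq_iff P.s_neg)
lemma plusd_sc: "plusd (\<lambda>n. pscale s0 c (F n)) = (\<lambda>n. pscale s0 c (plusd F n))"
  by (auto simp: plusd_def fun_eq_iff P.s_add P.d_s)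
lemma negsh_pow_sc: "(negsh ^^ i) (\<lambda>n. pscale s0 c (F n)) = (\<lambda>n. pscale s0 c ((negsh ^^ i) F n))"
  by (induction i) (auto simp: negsh_sc)
lemma plusd_pow_sc: "(plusd ^^ i) (\<lambda>n. pscale s0 c (F n)) = (\<lambda>n. pscale s0 c ((plusd ^^ i) F n))"
  by (induction i) (auto simp: plusd_sc)

context fixes f :: "'v \<Rightarrow> 'v \<Rightarrow> nat \<Rightarrow> 'v poly"
  assumes fadd1: "\<And>x x' y n. f (x + x') y n = f x y n + f x' y n"
    and fadd2: "\<And>x y y' n. f x (y + y') n = f x y n + f x y' n"
    and fs1: "\<And>c x y n. f (s0 c x) y n = pscale s0 c (f x y n)"
    and fs2: "\<And>c x y n. f x (s0 c y) n = pscale s0 c (f x y n)"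
    and fbnd: "\<And>x y n. n \<ge> 2 \<Longrightarrow> f x y n = 0"
begin

lemma f01[simp]: "f 0 y n = 0" using fadd1[of 0 0 y] by simp
lemma f02[simp]: "f x 0 n = 0" using fadd2[of x 0 0] by simp

lemma Ex_range: assumes "degree p \<le> m" "degree q \<le> m'" shows "Ex f p q n = Exr f p q m m' n"
proof -
  have z: "(negsh ^^ i) (\<lambda>n. 0) = (\<lambda>n. 0)" "(plusd ^^ j) (\<lambda>n. 0) = (\<lambda>n. 0)" for i j by (simp_all add: pow_0)
  have f0: "f 0 y = (\<lambda>n. 0)" "f x 0 = (\<lambda>n. 0)" for x y by (simp_all add: fun_eq_iff)
  have "Ex f p q n = (\<Sum>i\<le>m. \<Sum>j\<le>degree q. (negsh ^^ i) ((plusd ^^ j) (f (coeff p i) (coeff q j))) n)"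
    unfolding Ex_def Exr_def
    by (rule sum.mono_neutral_left) (use assms in \<open>auto simp: coeff_eq_0 z f0\<close>)
  also have "\<dots> = Exr f p q m m' n"
    unfolding Exr_def
    by (rule sum.cong[OF refl], rule sum.mono_neutral_left) (use assms in \<open>auto simp: coeff_eq_0 z f0\<close>)
  finally show ?thesis .
qed


lemma f0fun[simp]: "f 0 y = (\<lambda>n. 0)" "f x 0 = (\<lambda>n. 0)" by (simp_all add: fun_eq_iff)

lemma fun1: "f (x + x') y = (\<lambda>n. f x y n + f x' y n)" by (simp add: fun_eq_iff fadd1)
lemma fun2: "f x (y + y') = (\<lambda>n. f x y n + f x y' n)" by (simp add: fun_eq_iff fadd2)
lemma funs1: "f (s0 c x) y = (\<lambda>n. pscale s0 c (f x y n))" by (simp add: fun_eq_iff fs1)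
lemma funs2: "f x (s0 c y) = (\<lambda>n. pscale s0 c (f x y n))" by (simp add: fun_eq_iff fs2)

lemma Exr_add1: "Exr f (p + p') q m m' n = Exr f p q m m' n + Exr f p' q m m' n"
  by (simp add: Exr_def fun1 hom_pow[OF plusd_add] hom_pow[OF negsh_add] sum.distrib)
lemma Exr_add2: "Exr f p (q + q') m m' n = Exr f p q m m' n + Exr f p q' m m' n"
  by (simp add: Exr_def fun2 hom_pow[OF plusd_add] hom_pow[OF negsh_add] sum.distrib)

lemma Ex_add1: "Ex f (p + p') q n = Ex f p q n + Ex f p' q n"
proof -
  let ?m = "max (degree p) (degree p')"
  have "degree (p + p') \<le> ?m" by (rule degree_add_le) auto
  thus ?thesis using Ex_range[of p ?m q "degree q"] Ex_range[of p' ?m q "degree q"]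
      Ex_range[of "p + p'" ?m q "degree q"] by (simp add: Exr_add1)
qed
lemma Ex_add2: "Ex f p (q + q') n = Ex f p q n + Ex f p q' n"
proof -
  let ?m = "max (degree q) (degree q')"
  have "degree (q + q') \<le> ?m" by (rule degree_add_le) auto
  thus ?thesis using Ex_range[of p "degree p" q ?m] Ex_range[of p "degree p" q' ?m]
      Ex_range[of p "degree p" "q + q'" ?m] by (simp add: Exr_add2)
qed

lemma deg_pscale: "degree (pscale s0 c p) \<le> degree p"
  by (rule degree_le) (simp add: pscale_coeff[OF vs0] coeff_eq_0 vs_zero[OF vs0])

lemma Ex_s1: "Ex f (pscale s0 c p) q n = pscale s0 c (Ex f p q n)"
proof -
  have "Ex f (pscale s0 c p) q n = Exr f (pscale s0 c p) q (degree p) (degree q) n"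
    by (rule Ex_range) (simp_all add: deg_pscale)
  thus ?thesis by (simp add: Ex_def Exr_def pscale_coeff[OF vs0] funs1 plusd_pow_sc negsh_pow_sc P.s_sum)
qed
lemma Ex_s2: "Ex f p (pscale s0 c q) n = pscale s0 c (Ex f p q n)"
proof -
  have "Ex f p (pscale s0 c q) n = Exr f p (pscale s0 c q) (degree p) (degree q) n"
    by (rule Ex_range) (simp_all add: deg_pscale)
  thus ?thesis by (simp add: Ex_def Exr_def pscale_coeff[OF vs0] funs2 plusd_pow_sc negsh_pow_sc P.s_sum)
qed

lemma deg_pder: "degree (pder p) \<le> Suc (degree p)"
  unfolding pder_def by (rule degree_pCons_le)

lemma Ex_dp: "Ex f (pder p) q n = negsh (Ex f p q) n"
proof -
  have "Ex f (pder p) q n = Exr f (pder p) q (Suc (degree p)) (degree q) n"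
    by (rule Ex_range) (simp_all add: deg_pder)
  also have "\<dots> = (\<Sum>i\<le>degree p. \<Sum>j\<le>degree q. (negsh ^^ Suc i) ((plusd ^^ j) (f (coeff p i) (coeff q j))) n)"
    unfolding Exr_def sum.atMost_Suc_shift
    by (simp add: pder_coeff pow_0 del: funpow.simps)
  also have "\<dots> = negsh (Ex f p q) n"
    by (cases n) (simp_all add: negsh_def Ex_def Exr_def sum_negf)
  finally show ?thesis .
qed

lemma Ex_dq: "Ex f p (pder q) n = plusd (Ex f p q) n"
proof -
  have "Ex f p (pder q) n = Exr f p (pder q) (degree p) (Suc (degree q)) n"
    by (rule Ex_range) (simp_all add: deg_pder)
  also have "\<dots> = (\<Sum>i\<le>degree p. \<Sum>j\<le>degree q. plusd ((negsh ^^ i) ((plusd ^^ j) (f (coeff p i) (coeff q j)))) n)"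
    unfolding Exr_def sum.atMost_Suc_shift funpow.simps(2) comp_apply negsh_pow_plusd
    by (simp add: pder_coeff pow_0 del: funpow.simps)
  also have "\<dots> = plusd (Ex f p q) n"
    by (simp add: plusd_def Ex_def Exr_def P.d_sum sum.distrib)
  finally show ?thesis .
qed


lemma negsh_pow_supp: "(\<forall>n\<ge>K. F n = 0) \<Longrightarrow> \<forall>n\<ge>K + i. (negsh ^^ i) F n = 0"
  by (induction i) (auto simp: negsh_def)
lemma plusd_pow_supp: "(\<forall>n\<ge>K. F n = 0) \<Longrightarrow> \<forall>n\<ge>K + i. (plusd ^^ i) F n = 0"
  by (induction i) (auto simp: plusd_def pder_def)

lemma Ex_bnd: assumes "n \<ge> 2 + degree p + degree q" shows "Ex f p q n = 0"
  unfolding Ex_def Exr_def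
proof (intro sum.neutral ballI)
  fix i j assume i: "i \<in> {..degree p}" and j: "j \<in> {..degree q}"
  have "\<forall>n\<ge>2. f (coeff p i) (coeff q j) n = 0" using fbnd by blast
  hence "\<forall>n\<ge>2 + j. (plusd ^^ j) (f (coeff p i) (coeff q j)) n = 0" by (rule plusd_pow_supp)
  hence "\<forall>n\<ge>2 + j + i. (negsh ^^ i) ((plusd ^^ j) (f (coeff p i) (coeff q j))) n = 0" by (rule negsh_pow_supp)
  thus "(negsh ^^ i) ((plusd ^^ j) (f (coeff p i) (coeff q j))) n = 0" using i j assms by auto
qed

lemma Lx: "lam_poly (pscale s0) (Nx s0 f) p q n = Ex f p q n"
  by (simp add: lam_poly_def Nx_def P.s_s)

lemma Ex_const: "Ex f [:x:] [:y:] n = f x y n"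
  by (simp add: Ex_def Exr_def)

lemma lp_Nx: "lambda_product (pscale s0) pder (Nx s0 f)"
  unfolding lambda_product_def
proof (intro conjI allI)
  have vs: "vector_space (pscale s0)" by (rule vs_pscale[OF vs0])
  fix y n show "Vector_Spaces.linear (pscale s0) (pscale s0) (\<lambda>x. Nx s0 f x y n)"
    unfolding Vector_Spaces.linear_iff using vs
    by (simp add: Nx_def Ex_add1 Ex_s1 P.s_add P.s_s mult.commute)
next
  have vs: "vector_space (pscale s0)" by (rule vs_pscale[OF vs0])
  fix x n show "Vector_Spaces.linear (pscale s0) (pscale s0) (\<lambda>y. Nx s0 f x y n)"
    unfolding Vector_Spaces.linear_iff using vs
    by (simp add: Nx_def Ex_add2 Ex_s2 P.s_add P.s_s mult.commute)
next
  fix x y show "finite {n. Nx s0 f x y n \<noteq> 0}"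
  proof (rule finite_subset)
    show "{n. Nx s0 f x y n \<noteq> 0} \<subseteq> {..<2 + degree x + degree y}"
    proof
      fix n assume "n \<in> {n. Nx s0 f x y n \<noteq> 0}"
      hence "Nx s0 f x y n \<noteq> 0" by simp
      thus "n \<in> {..<2 + degree x + degree y}"
        using Ex_bnd[of x y n] by (cases "2 + degree x + degree y \<le> n") (auto simp: Nx_def)
    qed
  qed simp
next
  fix x y n show "lam_poly (pscale s0) (Nx s0 f) (pder x) y n = - lam_shift (lam_poly (pscale s0) (Nx s0 f) x y) n"
    by (simp add: Lx Ex_dp negsh_def lam_shift_def)
next
  fix x y n show "lam_poly (pscale s0) (Nx s0 f) x (pder y) n = pder (lam_poly (pscale s0) (Nx s0 f) x y n) + lam_shift (lam_poly (pscale s0) (Nx s0 f) x y) n"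
    by (simp add: Lx Ex_dq plusd_def lam_shift_def)
qed

lemma Nx_const: "Nx s0 f [:x:] [:y:] n = pscale s0 (fact n) (f x y n)"
  by (simp add: Nx_def Ex_const)

end
end


definition fA :: "('v \<Rightarrow> 'v \<Rightarrow> 'v) \<Rightarrow> 'v \<Rightarrow> 'v \<Rightarrow> nat \<Rightarrow> 'v::ab_group_add poly" where
  "fA pr' x y n = (if n = 0 then [:pr' x y:] else 0)"
definition fB :: "('v \<Rightarrow> 'v \<Rightarrow> 'v) \<Rightarrow> ('v \<Rightarrow> 'v \<Rightarrow> 'v) \<Rightarrow> ('v \<Rightarrow> 'v) \<Rightarrow> 'v \<Rightarrow> 'v \<Rightarrow> nat \<Rightarrow> 'v::ab_group_add poly" where
  "fB pr' br' D' x y n = (if n = 0 then [:br' x y:] + pder [:pr' y (D' x):]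
         else if n = 1 then [:D' (pr' x y):] else 0)"

context
  fixes s0 :: "'k::field_char_0 \<Rightarrow> 'v::ab_group_add \<Rightarrow> 'v" and pr br :: "'v \<Rightarrow> 'v \<Rightarrow> 'v" and D :: "'v \<Rightarrow> 'v"
  assumes PA: "poisson_algebra s0 pr br" and PD: "poisson_derivation s0 pr br D"
begin

lemma vs0: "vector_space s0" using PA unfolding poisson_algebra_def by blast

interpretation P: cfa "pscale s0" pder by (rule cfa_poly[OF vs0])

lemma linpr1: "Vector_Spaces.linear s0 s0 (\<lambda>x. pr x y)" using PA unfolding poisson_algebra_def by blast
lemma linpr2: "Vector_Spaces.linear s0 s0 (pr x)" using PA unfolding poisson_algebra_def by blast
lemma linbr1: "Vector_Spaces.linear s0 s0 (\<lambda>x. br x y)" using PA unfolding poisson_algebra_def by blast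
lemma linbr2: "Vector_Spaces.linear s0 s0 (br x)" using PA unfolding poisson_algebra_def by blast
lemma linD: "Vector_Spaces.linear s0 s0 D" using PD unfolding poisson_derivation_def by blast

lemma pr_add1: "pr (x + y) z = pr x z + pr y z" using linpr1[of z] unfolding Vector_Spaces.linear_iff by simp
lemma pr_add2: "pr z (x + y) = pr z x + pr z y" using linpr2[of z] unfolding Vector_Spaces.linear_iff by simp
lemma br_add1: "br (x + y) z = br x z + br y z" using linbr1[of z] unfolding Vector_Spaces.linear_iff by simp
lemma br_add2: "br z (x + y) = br z x + br z y" using linbr2[of z] unfolding Vector_Spaces.linear_iff by simp
lemma D_add: "D (x + y) = D x + D y" using linD unfolding Vector_Spaces.linear_iff by simp
lemma pr_s1: "pr (s0 c x) z = s0 c (pr x z)" using linpr1[of z] unfolding Vector_Spaces.linear_iff by simp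
lemma pr_s2: "pr z (s0 c x) = s0 c (pr z x)" using linpr2[of z] unfolding Vector_Spaces.linear_iff by simp
lemma br_s1: "br (s0 c x) z = s0 c (br x z)" using linbr1[of z] unfolding Vector_Spaces.linear_iff by simp
lemma br_s2: "br z (s0 c x) = s0 c (br z x)" using linbr2[of z] unfolding Vector_Spaces.linear_iff by simp
lemma D_s: "D (s0 c x) = s0 c (D x)" using linD unfolding Vector_Spaces.linear_iff by simp

lemma pr_zero1[simp]: "pr 0 z = 0" using pr_add1[of 0 0 z] by simp
lemma pr_zero2[simp]: "pr z 0 = 0" using pr_add2[of z 0 0] by simp
lemma br_zero1[simp]: "br 0 z = 0" using br_add1[of 0 0 z] by simp
lemma br_zero2[simp]: "br z 0 = 0" using br_add2[of z 0 0] by simp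
lemma D_zero[simp]: "D 0 = 0" using D_add[of 0 0] by simp
lemma neg_helper: "f (- x) = - f x" if "\<And>a b. f (a + b) = f a + f b" for f :: "'v \<Rightarrow> 'v"
proof -
  have "f 0 = 0" using that[of 0 0] by simp
  hence "f (- x) + f x = 0" using that[of "- x" x] by simp
  thus ?thesis by (simp add: eq_neg_iff_add_eq_0)
qed
lemma pr_neg1: "pr (- x) z = - pr x z" by (rule neg_helper[of "\<lambda>x. pr x z"]) (rule pr_add1)
lemma pr_neg2: "pr z (- x) = - pr z x" by (rule neg_helper[of "pr z"]) (rule pr_add2)
lemma br_neg1: "br (- x) z = - br x z" by (rule neg_helper[of "\<lambda>x. br x z"]) (rule br_add1)
lemma br_neg2: "br z (- x) = - br z x" by (rule neg_helper[of "br z"]) (rule br_add2)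
lemma D_neg: "D (- x) = - D x" by (rule neg_helper) (rule D_add)

lemma pr_diff1: "pr (x - y) z = pr x z - pr y z" by (simp only: diff_conv_add_uminus pr_add1 pr_neg1)
lemma pr_diff2: "pr z (x - y) = pr z x - pr z y" by (simp only: diff_conv_add_uminus pr_add2 pr_neg2)
lemma br_diff1: "br (x - y) z = br x z - br y z" by (simp only: diff_conv_add_uminus br_add1 br_neg1)
lemma br_diff2: "br z (x - y) = br z x - br z y" by (simp only: diff_conv_add_uminus br_add2 br_neg2)
lemma D_diff: "D (x - y) = D x - D y" by (simp only: diff_conv_add_uminus D_add D_neg)

lemma pr_assoc: "pr (pr x y) z = pr x (pr y z)" using PA unfolding poisson_algebra_def by blast
lemma pr_comm: "pr x y = pr y x" using PA unfolding poisson_algebra_def by blast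
lemma br_skew: "br x y = - br y x" using PA unfolding poisson_algebra_def by blast
lemma br_jac: "br x (br y z) = br (br x y) z + br y (br x z)" using PA unfolding poisson_algebra_def by blast
lemma leib: "br x (pr y z) = pr (br x y) z + pr y (br x z)" using PA unfolding poisson_algebra_def by blast
lemma D_pr: "D (pr x y) = pr (D x) y + pr x (D y)" using PD unfolding poisson_derivation_def by blast
lemma D_br: "D (br x y) = br (D x) y + br x (D y)" using PD unfolding poisson_derivation_def by blast
lemma leib1: "br (pr x y) z = pr x (br y z) + pr (br x z) y"
  by (metis br_skew leib pr_comm add.commute minus_add_distrib pr_neg1 pr_neg2)

lemma pr_lcomm: "pr x (pr y z) = pr y (pr x z)" by (metis pr_assoc pr_comm)

lemma pscale_pCons: "pscale s0 c (pCons a p) = pCons (s0 c a) (pscale s0 c p)"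
  unfolding pscale_def by (rule map_poly_pCons) (rule vs_zero[OF vs0])
lemma pscale_0: "pscale s0 c 0 = 0" unfolding pscale_def by simp
lemma s0_add: "s0 c (x + y) = s0 c x + s0 c y" using vs0 unfolding vector_space_def by blast
lemma s0_ladd: "s0 (a + b) x = s0 a x + s0 b x" using vs0 unfolding vector_space_def by blast
lemma s0_one: "s0 1 x = x" using vs0 unfolding vector_space_def by blast
lemma s0_zero: "s0 c 0 = 0" by (rule vs_zero[OF vs0])
lemma s0_neg: "s0 c (- x) = - s0 c x" by (rule neg_helper) (rule s0_add)
lemma s0_zerol: "s0 0 x = 0"
proof -
  have "s0 (0 + 0) x = s0 0 x + s0 0 x" by (rule s0_ladd)
  thus ?thesis by simp
qed
lemma s0_negl: "s0 (- c) x = - s0 c x"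
proof -
  have "s0 (- c) x + s0 c x = 0" using s0_ladd[of "- c" c x] by (simp add: s0_zerol)
  thus ?thesis by (simp add: eq_neg_iff_add_eq_0)
qed
lemma s0_two: "s0 2 x = x + x" using s0_ladd[of 1 1 x] by (simp add: s0_one)

lemmas Psimps = pder_def pscale_pCons pscale_0 s0_one s0_zero s0_neg s0_negl s0_two s0_zerol binomial_eq_0

lemmas Vsimps = pr_add1 pr_add2 br_add1 br_add2 D_add pr_neg1 pr_neg2 br_neg1 br_neg2 D_neg
  pr_s1 pr_s2 br_s1 br_s2 D_s D_pr D_br leib leib1 pr_diff1 pr_diff2 br_diff1 br_diff2 D_diff

context fixes A B assumes CE: "conformal_extension s0 pr br D A B"
begin

lemma lpA: "lambda_product (pscale s0) pder A" using CE unfolding conformal_extension_def by blast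
lemma lpB: "lambda_product (pscale s0) pder B" using CE unfolding conformal_extension_def by blast

lemma A0: "lam_poly (pscale s0) A [:x:] [:y:] n = (if n = 0 then [:pr x y:] else 0)"
  using CE unfolding conformal_extension_def lam_poly_def by simp
lemma B0: "lam_poly (pscale s0) B [:x:] [:y:] n = (if n = 0 then [:br x y:] + pder [:pr y (D x):]
         else if n = 1 then [:D (pr x y):] else 0)"
  using CE unfolding conformal_extension_def lam_poly_def by simp

lemma assoc_base: "lam_nest (pscale s0) A A [:u:] [:v:] [:w:] a b = lam_comp (pscale s0) A A [:u:] [:v:] [:w:] a b"
  by (simp add: lam_nest_def P.comp_alt[OF lpA lpA] P.Cmp_small A0 pr_assoc P.L_zero1[OF lpA] P.L_zero2[OF lpA])


lemma Aeq: "A [:x:] [:y:] n = (if n = 0 then [:pr x y:] else 0)"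
  using CE unfolding conformal_extension_def by blast
lemma Beq: "B [:x:] [:y:] n = (if n = 0 then [:br x y:] + pder [:pr y (D x):]
         else if n = 1 then [:D (pr x y):] else 0)"
  using CE unfolding conformal_extension_def by blast
lemma bndA: "\<forall>m\<ge>2. A [:v:] [:u:] m = 0" by (simp add: Aeq)
lemma bndB: "\<forall>m\<ge>2. B [:v:] [:u:] m = 0" by (simp add: Beq)

lemma Ng2: "Ng s d F n 2 = s (of_nat (0 choose n)) ((d ^^ (0 - n)) (F 0)) + s (- of_nat (1 choose n)) ((d ^^ (1 - n)) (F 1))"
  by (simp add: Ng_def numeral_2_eq_2)

lemma comm_base: "lam_poly (pscale s0) A [:u:] [:v:] n = lam_negsub (pscale s0) pder A [:v:] [:u:] n"
  unfolding P.negsub_Ng[OF lpA bndA] Ng2 by (simp add: A0 Psimps pr_comm)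

lemma skew_base: "lam_poly (pscale s0) B [:u:] [:v:] n = - lam_negsub (pscale s0) pder B [:v:] [:u:] n"
  unfolding P.negsub_Ng[OF lpB bndB] Ng2 by (simp add: B0 Psimps Vsimps pr_comm br_skew[of v u] algebra_simps)


lemmas Lsimps = lam_nest_def P.comp_alt[OF lpB lpA] P.comp_alt[OF lpB lpB] P.comp_alt[OF lpA lpA] P.Cmp_small A0 B0
  P.L_zero1[OF lpA] P.L_zero2[OF lpA] P.L_zero1[OF lpB] P.L_zero2[OF lpB]
  P.L_add1[OF lpA] P.L_add2[OF lpA] P.L_add1[OF lpB] P.L_add2[OF lpB]
  P.L_d1[OF lpA] P.L_d2[OF lpA] P.L_d1[OF lpB] P.L_d2[OF lpB]
  P.L_neg1[OF lpA] P.L_neg2[OF lpA] P.L_neg1[OF lpB] P.L_neg2[OF lpB]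

lemma leib_base: "lam_nest (pscale s0) B A [:u:] [:v:] [:w:] a b =
   lam_comp (pscale s0) B A [:u:] [:v:] [:w:] a b + lam_nest (pscale s0) A B [:v:] [:u:] [:w:] b a"
  apply (simp add: Lsimps)
  by (simp add: Psimps Vsimps pr_assoc pr_comm pr_lcomm algebra_simps)


lemma jac_base: "lam_nest (pscale s0) B B [:u:] [:v:] [:w:] a b =
   lam_comp (pscale s0) B B [:u:] [:v:] [:w:] a b + lam_nest (pscale s0) B B [:v:] [:u:] [:w:] b a"
  apply (simp add: Lsimps)
  apply (simp add: Psimps Vsimps pr_assoc pr_comm pr_lcomm algebra_simps br_skew[of "D u" v] br_skew[of v u] br_jac[of u v w])
  done


lemma red3: assumes "P.good3 Ea" "P.good3 Eb" "P.good3 Ec"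
    "\<And>u v w a b. Ea [:u:] [:v:] [:w:] a b = Eb [:u:] [:v:] [:w:] a b + Ec [:u:] [:v:] [:w:] a b"
  shows "Ea x y z a b = Eb x y z a b + Ec x y z a b"
  apply (rule P.reduce3[of "\<lambda>u. [:u:]" Ea Eb Ec])
  apply (rule poly_gen; assumption)
  using assms by simp_all

lemma red2: assumes "P.good2 Ea" "P.good2 Eb" "\<And>u v n. Ea [:u:] [:v:] n = Eb [:u:] [:v:] n"
  shows "Ea x y n = Eb x y n"
  apply (rule P.reduce2[of "\<lambda>u. [:u:]" Ea Eb])
  apply (rule poly_gen; assumption)
  using assms by simp_all

lemma pca: "poisson_conformal_algebra (pscale s0) pder A B"
  unfolding poisson_conformal_algebra_def
proof (intro conjI allI)
  show "hmodule (pscale s0) pder" unfolding hmodule_def using vs_pscale[OF vs0] lin_pder[OF vs0] by blast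
  show "lambda_product (pscale s0) pder A" by (rule lpA)
  show "lambda_product (pscale s0) pder B" by (rule lpB)
next
  fix x y z a b
  have "lam_nest (pscale s0) A A x y z a b = lam_comp (pscale s0) A A x y z a b + (\<lambda>x y z a b. 0) x y z a b"
    by (rule red3[OF P.good3_nest[OF lpA lpA] P.good3_comp[OF lpA lpA] P.good3_zero])
      (simp add: assoc_base)
  thus "lam_nest (pscale s0) A A x y z a b = lam_comp (pscale s0) A A x y z a b" by simp
next
  fix x y n
  show "lam_poly (pscale s0) A x y n = lam_negsub (pscale s0) pder A y x n"
    by (rule red2[where Eb="\<lambda>x y n. lam_negsub (pscale s0) pder A y x n",
          OF P.good2_L[OF lpA] P.good2_negsub[OF lpA]]) (simp add: comm_base)
next
  fix x y n
  show "lam_poly (pscale s0) B x y n = - lam_negsub (pscale s0) pder B y x n"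
    by (rule red2[where Eb="\<lambda>x y n. - lam_negsub (pscale s0) pder B y x n",
          OF P.good2_L[OF lpB] P.good2_neg[OF P.good2_negsub[OF lpB]]]) (simp add: skew_base)
next
  fix x y z a b
  have "lam_nest (pscale s0) B B x y z a b = lam_comp (pscale s0) B B x y z a b
      + (\<lambda>x y z a b. lam_nest (pscale s0) B B y x z b a) x y z a b"
    by (rule red3[OF P.good3_nest[OF lpB lpB] P.good3_comp[OF lpB lpB] P.good3_swap[OF lpB lpB]])
      (rule jac_base)
  thus "lam_nest (pscale s0) B B x y z a b - lam_nest (pscale s0) B B y x z b a = lam_comp (pscale s0) B B x y z a b"
    by simp
next
  fix x y z a b
  show "lam_nest (pscale s0) B A x y z a b = lam_comp (pscale s0) B A x y z a b + lam_nest (pscale s0) A B y x z b a"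
    using red3[where Ec="\<lambda>x y z a b. lam_nest (pscale s0) A B y x z b a",
       OF P.good3_nest[OF lpB lpA] P.good3_comp[OF lpB lpA] P.good3_swap[OF lpA lpB]]
    by (simp add: leib_base)
qed

end

lemma fA_add1: "fA pr (x + x') y n = fA pr x y n + fA pr x' y n" by (simp add: fA_def pr_add1)
lemma fA_add2: "fA pr x (y + y') n = fA pr x y n + fA pr x y' n" by (simp add: fA_def pr_add2)
lemma fA_s1: "fA pr (s0 c x) y n = pscale s0 c (fA pr x y n)" by (simp add: fA_def pr_s1 pscale_pCons pscale_0)
lemma fA_s2: "fA pr x (s0 c y) n = pscale s0 c (fA pr x y n)" by (simp add: fA_def pr_s2 pscale_pCons pscale_0)
lemma fA_bnd: "n \<ge> 2 \<Longrightarrow> fA pr x y n = 0" by (simp add: fA_def)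

lemma fB_add1: "fB pr br D (x + x') y n = fB pr br D x y n + fB pr br D x' y n"
  by (simp add: fB_def Vsimps Psimps algebra_simps)
lemma fB_add2: "fB pr br D x (y + y') n = fB pr br D x y n + fB pr br D x y' n"
  by (simp add: fB_def Vsimps Psimps algebra_simps)
lemma fB_s1: "fB pr br D (s0 c x) y n = pscale s0 c (fB pr br D x y n)"
  by (simp add: fB_def Vsimps Psimps s0_add)
lemma fB_s2: "fB pr br D x (s0 c y) n = pscale s0 c (fB pr br D x y n)"
  by (simp add: fB_def Vsimps Psimps s0_add)
lemma fB_bnd: "n \<ge> 2 \<Longrightarrow> fB pr br D x y n = 0" by (simp add: fB_def)

lemma Nx_c: "Nx s0 f [:x:] [:y:] n = pscale s0 (fact n) (f x y n)"
  by (simp add: Nx_def Ex_def Exr_def)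

lemma existence: "conformal_extension s0 pr br D (Nx s0 (fA pr)) (Nx s0 (fB pr br D))"
  unfolding conformal_extension_def
proof (intro conjI allI)
  show "lambda_product (pscale s0) pder (Nx s0 (fA pr))"
    by (rule lp_Nx[OF vs0]) (simp_all add: fA_add1 fA_add2 fA_s1 fA_s2 fA_bnd)
  show "lambda_product (pscale s0) pder (Nx s0 (fB pr br D))"
    by (rule lp_Nx[OF vs0]) (simp_all add: fB_add1 fB_add2 fB_s1 fB_s2 fB_bnd)
next
  fix x y n show "Nx s0 (fA pr) [:x:] [:y:] n = (if n = 0 then [:pr x y:] else 0)"
    by (simp add: Nx_c fA_def P.s_one)
next
  fix x y n show "Nx s0 (fB pr br D) [:x:] [:y:] n = (if n = 0 then [:br x y:] + pder [:pr y (D x):]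
         else if n = 1 then [:D (pr x y):] else 0)"
    by (simp add: Nx_c fB_def P.s_one)
qed

end

theorem mainTheorem3:
  fixes s :: "'k::field_char_0 \<Rightarrow> 'v::ab_group_add \<Rightarrow> 'v"
    and pr br :: "'v \<Rightarrow> 'v \<Rightarrow> 'v" and D :: "'v \<Rightarrow> 'v"
  assumes "poisson_algebra s pr br"
    and "poisson_derivation s pr br D"
  shows "(\<exists>A B. conformal_extension s pr br D A B) \<and>
         (\<forall>A B. conformal_extension s pr br D A B \<longrightarrow>
                 poisson_conformal_algebra (pscale s) pder A B)"
  using existence[OF assms] pca[OF assms] by blast


end
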